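(* For any $d\in\mathbb{Z}_{\ge0}$ and $\varepsilon\in(0,1/2)$, there are $\rho_0,\dots,\rho_d\in[0,1-\varepsilon]$ and $c_0,\dots,c_d\in\mathbb{R}$ such that: (1) $\sum_{j=0}^dc_j\rho_j^k=1$ for $k=0,1,\dots,d$; (2) $0\le\sum_{j=0}^dc_j\rho_j^k\le1$ for all integers $k\ge d+1$; (3) $\sum_{j=0}^d|c_j|\le 2^{O(d\sqrt{\varepsilon})}$, where the implied constant is absolute. *)

theory Defs
  imports Complex_Main
begin

end

theory Submission
  imports Defs "HOL-Computational_Algebra.Polynomial"
begin


definition lagc :: "(nat \<Rightarrow> real) \<Rightarrow> nat set \<Rightarrow> real \<Rightarrow> nat \<Rightarrow> real" where
  "lagc \<rho> I x j = (\<Prod>i\<in>I-{j}. (x - \<rho> i)) / (\<Prod>i\<in>I-{j}. (\<rho> j - \<rho> i))"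

definition DD :: "(nat \<Rightarrow> real) \<Rightarrow> nat set \<Rightarrow> nat \<Rightarrow> real" where
  "DD \<rho> I k = (\<Sum>j\<in>I. \<rho> j ^ k / (\<Prod>i\<in>I-{j}. (\<rho> j - \<rho> i)))"

lemma prod_linear:
  assumes "finite A"
  shows "degree (\<Prod>i\<in>A. [:- (\<rho> i::real), 1:]) = card A \<and> coeff (\<Prod>i\<in>A. [:- \<rho> i, 1:]) (card A) = 1"
proof -
  have d: "degree (\<Prod>i\<in>A. [:- (\<rho> i::real), 1:]) = card A"
    by (subst degree_prod_eq_sum_degree) auto
  have "lead_coeff (\<Prod>i\<in>A. [:- (\<rho> i::real), 1:]) = 1"
    by (subst lead_coeff_prod) auto
  with d show ?thesis by simp
qed

lemma lagrange_poly:
  fixes p :: "real poly"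
  assumes fin: "finite I" and inj: "inj_on \<rho> I" and dp: "degree p < card I"
  shows "(\<Sum>j\<in>I. smult (poly p (\<rho> j) / (\<Prod>i\<in>I-{j}. (\<rho> j - \<rho> i))) (\<Prod>i\<in>I-{j}. [:-\<rho> i,1:])) = p"
    (is "?L = p")
proof (rule ccontr)
  assume ne: "?L \<noteq> p"
  have degL: "degree ?L \<le> card I - 1"
  proof (rule degree_sum_le[OF fin])
    fix j assume j: "j \<in> I"
    have "degree (smult (poly p (\<rho> j) / (\<Prod>i\<in>I-{j}. (\<rho> j - \<rho> i))) (\<Prod>i\<in>I-{j}. [:-\<rho> i,1:]))
       \<le> degree (\<Prod>i\<in>I-{j}. [:-\<rho> i,1:])" by (rule degree_smult_le)
    also have "\<dots> = card (I - {j})" using prod_linear[of "I-{j}" \<rho>] fin by auto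
    also have "\<dots> = card I - 1" using j fin by simp
    finally show "degree (smult (poly p (\<rho> j) / (\<Prod>i\<in>I-{j}. (\<rho> j - \<rho> i))) (\<Prod>i\<in>I-{j}. [:-\<rho> i,1:])) \<le> card I - 1" .
  qed
  have ev: "poly ?L (\<rho> m) = poly p (\<rho> m)" if m: "m \<in> I" for m
  proof -
    have z: "poly (smult (poly p (\<rho> j) / (\<Prod>i\<in>I-{j}. (\<rho> j - \<rho> i))) (\<Prod>i\<in>I-{j}. [:-\<rho> i,1:])) (\<rho> m) = 0"
      if "j \<in> I - {m}" for j
    proof -
      have "(\<Prod>i\<in>I-{j}. poly [:-\<rho> i,1:] (\<rho> m)) = 0"
        using that m fin by (subst prod_zero_iff) auto
      then show ?thesis by (simp add: poly_prod)
    qed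
    have nz: "(\<Prod>i\<in>I-{m}. (\<rho> m - \<rho> i)) \<noteq> 0"
      using fin m inj by (subst prod_zero_iff) (auto simp: inj_on_def)
    have zz: "(\<Sum>j\<in>I-{m}. poly (smult (poly p (\<rho> j) / (\<Prod>i\<in>I-{j}. (\<rho> j - \<rho> i))) (\<Prod>i\<in>I-{j}. [:-\<rho> i,1:])) (\<rho> m)) = 0"
      by (rule sum.neutral) (use z in blast)
    have "poly ?L (\<rho> m) = (\<Sum>j\<in>I. poly (smult (poly p (\<rho> j) / (\<Prod>i\<in>I-{j}. (\<rho> j - \<rho> i))) (\<Prod>i\<in>I-{j}. [:-\<rho> i,1:])) (\<rho> m))"
      by (simp add: poly_sum)
    also have "\<dots> = poly (smult (poly p (\<rho> m) / (\<Prod>i\<in>I-{m}. (\<rho> m - \<rho> i))) (\<Prod>i\<in>I-{m}. [:-\<rho> i,1:])) (\<rho> m)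
       + (\<Sum>j\<in>I-{m}. poly (smult (poly p (\<rho> j) / (\<Prod>i\<in>I-{j}. (\<rho> j - \<rho> i))) (\<Prod>i\<in>I-{j}. [:-\<rho> i,1:])) (\<rho> m))"
      using m fin by (subst sum.remove[of I m]) auto
    also have "\<dots> = poly p (\<rho> m)" using nz zz by (simp add: poly_prod)
    finally show ?thesis .
  qed
  have nz: "?L - p \<noteq> 0" using ne by simp
  have sub: "\<rho> ` I \<subseteq> {x. poly (?L - p) x = 0}" using ev by auto
  have "card I = card (\<rho> ` I)" using inj by (simp add: card_image)
  also have "\<dots> \<le> card {x. poly (?L - p) x = 0}"
    by (rule card_mono[OF poly_roots_finite[OF nz] sub])
  also have "\<dots> \<le> degree (?L - p)" by (rule card_poly_roots_bound[OF nz])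
  also have "\<dots> \<le> max (degree ?L) (degree p)" by (rule degree_diff_le_max)
  finally show False using degL dp by linarith
qed

lemma interp:
  fixes p :: "real poly"
  assumes "finite I" "inj_on \<rho> I" "degree p < card I"
  shows "(\<Sum>j\<in>I. lagc \<rho> I x j * poly p (\<rho> j)) = poly p x"
proof -
  have "poly p x = poly (\<Sum>j\<in>I. smult (poly p (\<rho> j) / (\<Prod>i\<in>I-{j}. (\<rho> j - \<rho> i))) (\<Prod>i\<in>I-{j}. [:-\<rho> i,1:])) x"
    using lagrange_poly[OF assms] by simp
  also have "\<dots> = (\<Sum>j\<in>I. lagc \<rho> I x j * poly p (\<rho> j))"
    by (simp add: poly_sum poly_prod lagc_def mult.commute)
  finally show ?thesis by simp
qed

lemma interp_pow:
  assumes "finite I" "inj_on \<rho> I" "k < card I"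
  shows "(\<Sum>j\<in>I. lagc \<rho> I x j * \<rho> j ^ k) = x ^ k"
  using interp[OF assms(1,2), of "monom 1 k" x] assms(3) by (simp add: poly_monom degree_monom_eq)

lemma DD_zero:
  assumes fin: "finite I" and inj: "inj_on \<rho> I" and c: "card I \<ge> 2"
  shows "DD \<rho> I 0 = 0"
proof -
  have "coeff (\<Sum>j\<in>I. smult (poly 1 (\<rho> j) / (\<Prod>i\<in>I-{j}. (\<rho> j - \<rho> i))) (\<Prod>i\<in>I-{j}. [:-\<rho> i,1:])) (card I - 1)
     = coeff (1::real poly) (card I - 1)"
    using lagrange_poly[OF fin inj, of 1] c by simp
  also have "\<dots> = 0" using c by simp
  also have "coeff (\<Sum>j\<in>I. smult (poly 1 (\<rho> j) / (\<Prod>i\<in>I-{j}. (\<rho> j - \<rho> i))) (\<Prod>i\<in>I-{j}. [:-\<rho> i,1:])) (card I - 1)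
     = (\<Sum>j\<in>I. 1 / (\<Prod>i\<in>I-{j}. (\<rho> j - \<rho> i)) * coeff (\<Prod>i\<in>I-{j}. [:-\<rho> i,1:]) (card (I - {j})))"
    using fin by (simp add: coeff_sum)
  also have "\<dots> = DD \<rho> I 0"
    unfolding DD_def
  proof (intro sum.cong refl)
    fix j assume "j \<in> I"
    then have "coeff (\<Prod>i\<in>I-{j}. [:-\<rho> i,1:]) (card (I - {j})) = 1"
      using prod_linear[of "I-{j}" \<rho>] fin by auto
    then show "1 / (\<Prod>i\<in>I-{j}. (\<rho> j - \<rho> i)) * coeff (\<Prod>i\<in>I-{j}. [:-\<rho> i,1:]) (card (I - {j}))
      = \<rho> j ^ 0 / (\<Prod>i\<in>I-{j}. (\<rho> j - \<rho> i))" by simp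
  qed
  finally show ?thesis by simp
qed

lemma DD_rec:
  assumes fin: "finite I" and a: "a \<notin> I" and inj: "inj_on \<rho> (insert a I)"
  shows "DD \<rho> (insert a I) (Suc k) = \<rho> a * DD \<rho> (insert a I) k + DD \<rho> I k"
proof -
  have ia: "insert a I - {a} = I" using a by auto
  have ij: "\<And>j. j \<in> I \<Longrightarrow> insert a I - {j} = insert a (I - {j})" using a by auto
  have ne: "\<And>j. j \<in> I \<Longrightarrow> \<rho> j \<noteq> \<rho> a" using inj a by (auto simp: inj_on_def)
  have t: "\<rho> j ^ Suc k / ((\<rho> j - \<rho> a) * (\<Prod>i\<in>I-{j}. (\<rho> j - \<rho> i)))
     = \<rho> a * (\<rho> j ^ k / ((\<rho> j - \<rho> a) * (\<Prod>i\<in>I-{j}. (\<rho> j - \<rho> i))))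
       + \<rho> j ^ k / (\<Prod>i\<in>I-{j}. (\<rho> j - \<rho> i))" if j: "j \<in> I" for j
  proof (cases "(\<Prod>i\<in>I-{j}. (\<rho> j - \<rho> i)) = 0")
    case True then show ?thesis by simp
  next
    case False
    have "\<rho> j - \<rho> a \<noteq> 0" using ne[OF j] by simp
    with False show ?thesis by (simp add: field_simps)
  qed
  have "DD \<rho> (insert a I) (Suc k) = \<rho> a * \<rho> a ^ k / (\<Prod>i\<in>I. (\<rho> a - \<rho> i))
     + (\<Sum>j\<in>I. \<rho> j ^ Suc k / ((\<rho> j - \<rho> a) * (\<Prod>i\<in>I-{j}. (\<rho> j - \<rho> i))))"
    unfolding DD_def using fin a by (simp add: ia ij cong: sum.cong)
  also have "\<dots> = \<rho> a * \<rho> a ^ k / (\<Prod>i\<in>I. (\<rho> a - \<rho> i))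
     + (\<Sum>j\<in>I. \<rho> a * (\<rho> j ^ k / ((\<rho> j - \<rho> a) * (\<Prod>i\<in>I-{j}. (\<rho> j - \<rho> i))))
       + \<rho> j ^ k / (\<Prod>i\<in>I-{j}. (\<rho> j - \<rho> i)))"
    using t by (simp cong: sum.cong)
  also have "\<dots> = \<rho> a * (\<rho> a ^ k / (\<Prod>i\<in>I. (\<rho> a - \<rho> i))
     + (\<Sum>j\<in>I. \<rho> j ^ k / ((\<rho> j - \<rho> a) * (\<Prod>i\<in>I-{j}. (\<rho> j - \<rho> i)))))
     + (\<Sum>j\<in>I. \<rho> j ^ k / (\<Prod>i\<in>I-{j}. (\<rho> j - \<rho> i)))"
    by (simp add: sum.distrib sum_distrib_left algebra_simps)
  also have "\<dots> = \<rho> a * DD \<rho> (insert a I) k + DD \<rho> I k"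
    unfolding DD_def using fin a by (simp add: ia ij cong: sum.cong)
  finally show ?thesis .
qed

lemma DD_nonneg:
  assumes "finite I" "inj_on \<rho> I" "\<forall>i\<in>I. 0 \<le> \<rho> i"
  shows "0 \<le> DD \<rho> I k"
  using assms
proof (induction I arbitrary: k rule: finite_induct)
  case empty then show ?case by (simp add: DD_def)
next
  case (insert a F)
  show ?case
  proof (cases "F = {}")
    case True then show ?thesis using insert by (simp add: DD_def)
  next
    case False
    have "card F \<noteq> 0" using False insert(1) by simp
    moreover have "card (insert a F) = Suc (card F)" using insert(1,2) by simp
    ultimately have c: "card (insert a F) \<ge> 2" by linarith
    have IH: "\<And>k. 0 \<le> DD \<rho> F k" using insert by (auto intro: inj_on_subset)
    show ?thesis
    proof (induction k)
      case 0 then show ?case using DD_zero[OF _ insert.prems(1) c] insert by simp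
    next
      case (Suc k)
      then show ?case using DD_rec[OF insert(1,2) insert.prems(1)] IH insert.prems(2) by simp
    qed
  qed
qed

lemma cond2:
  assumes fin: "finite I" and ne: "I \<noteq> {}" and inj: "inj_on \<rho> I"
    and rng: "\<forall>i\<in>I. 0 \<le> \<rho> i \<and> \<rho> i < 1" and k: "k \<ge> card I - 1"
  shows "0 \<le> (\<Sum>j\<in>I. lagc \<rho> I 1 j * \<rho> j ^ k) \<and> (\<Sum>j\<in>I. lagc \<rho> I 1 j * \<rho> j ^ k) \<le> 1"
proof -
  define a where "a k = (\<Sum>j\<in>I. lagc \<rho> I 1 j * \<rho> j ^ k)" for k
  have stepa: "a (Suc m) \<le> a m" for m
  proof -
    have e: "lagc \<rho> I 1 j * \<rho> j ^ m - lagc \<rho> I 1 j * \<rho> j ^ Suc m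
       = (\<Prod>i\<in>I. (1 - \<rho> i)) * (\<rho> j ^ m / (\<Prod>i\<in>I-{j}. (\<rho> j - \<rho> i)))" if j: "j \<in> I" for j
    proof -
      have "(\<Prod>i\<in>I. (1 - \<rho> i)) = (1 - \<rho> j) * (\<Prod>i\<in>I-{j}. (1 - \<rho> i))"
        using fin j by (simp add: prod.remove)
      moreover have "\<And>Q P r. (Q::real)/P*r^m - Q/P*r^Suc m = (1-r)*Q*(r^m/P)"
        by (simp add: algebra_simps diff_divide_distrib[symmetric])
      ultimately show ?thesis unfolding lagc_def by (simp only:)
    qed
    have "a m - a (Suc m) = (\<Sum>j\<in>I. lagc \<rho> I 1 j * \<rho> j ^ m - lagc \<rho> I 1 j * \<rho> j ^ Suc m)"
      unfolding a_def by (simp add: sum_subtractf)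
    also have "\<dots> = (\<Prod>i\<in>I. (1 - \<rho> i)) * DD \<rho> I m"
      unfolding DD_def sum_distrib_left using e by simp
    also have "\<dots> \<ge> 0"
      using DD_nonneg[OF fin inj, of m] rng by (intro mult_nonneg_nonneg prod_nonneg) auto
    finally show ?thesis by simp
  qed
  have a1: "a (card I - 1) = 1" unfolding a_def
    using interp_pow[OF fin inj, of "card I - 1" 1] ne fin by (simp add: card_gt_0_iff)
  have up: "a k \<le> 1"
    using k
  proof (induction k rule: dec_induct)
    case base then show ?case using a1 by simp
  next
    case (step n) then show ?case using stepa[of n] by simp
  qed
  have lim: "(\<lambda>m. a (m + k)) \<longlonglongrightarrow> 0"
  proof -
    have "(\<lambda>m. \<Sum>j\<in>I. (lagc \<rho> I 1 j * \<rho> j ^ k) * \<rho> j ^ m) \<longlonglongrightarrow> (\<Sum>j\<in>I. 0)"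
    proof (rule tendsto_sum)
      fix j assume "j \<in> I"
      then have "norm (\<rho> j) < 1" using rng by auto
      then show "(\<lambda>m. (lagc \<rho> I 1 j * \<rho> j ^ k) * \<rho> j ^ m) \<longlonglongrightarrow> 0"
        by (intro tendsto_mult_right_zero LIMSEQ_power_zero)
    qed
    moreover have "(\<Sum>j\<in>I. (lagc \<rho> I 1 j * \<rho> j ^ k) * \<rho> j ^ m) = a (m + k)" for m
      unfolding a_def by (intro sum.cong refl) (simp add: power_add)
    ultimately show ?thesis by simp
  qed
  have "decseq (\<lambda>m. a (m + k))"
    by (rule decseq_SucI) (simp add: stepa)
  from decseq_ge[OF this lim] have "0 \<le> a (0 + k)" .
  with up show ?thesis unfolding a_def by simp
qed



fun cheb :: "nat \<Rightarrow> real poly" where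
  "cheb 0 = 1"
| "cheb (Suc 0) = [:0,1:]"
| "cheb (Suc (Suc n)) = [:0,2:] * cheb (Suc n) - cheb n"

lemma cheb_deg: "degree (cheb n) \<le> n"
proof (induction n rule: cheb.induct)
  case (3 n)
  have "degree ([:0,2:] * cheb (Suc n)) \<le> Suc (Suc n)"
    using degree_mult_le[of "[:0,2:]" "cheb (Suc n)"] 3(1) by simp
  then show ?case using 3(2) degree_diff_le by (simp add: degree_diff_le)
qed auto

lemma cheb_cos: "poly (cheb n) (cos x) = cos (real n * x)"
proof (induction n rule: cheb.induct)
  case (3 n)
  have "cos (real (Suc (Suc n)) * x) + cos (real n * x) = 2 * cos x * cos (real (Suc n) * x)"
  proof -
    have a: "real (Suc (Suc n)) * x = real (Suc n) * x + x" by (simp add: algebra_simps)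
    have b: "real n * x = real (Suc n) * x - x" by (simp add: algebra_simps)
    show ?thesis unfolding a b cos_add cos_diff by simp
  qed
  then show ?case using 3 by (simp add: algebra_simps)
qed auto

lemma cheb_cosh: "poly (cheb n) (cosh x) = cosh (real n * x)"
proof (induction n rule: cheb.induct)
  case (3 n)
  have "cosh (real (Suc (Suc n)) * x) + cosh (real n * x) = 2 * cosh x * cosh (real (Suc n) * x)"
  proof -
    have a: "real (Suc (Suc n)) * x = real (Suc n) * x + x" by (simp add: algebra_simps)
    have b: "real n * x = real (Suc n) * x - x" by (simp add: algebra_simps)
    show ?thesis unfolding a b cosh_add cosh_diff by simp
  qed
  then show ?case using 3 by (simp add: algebra_simps)
qed auto



lemma construct:
  fixes d :: nat and \<epsilon> :: real
  assumes e0: "0 < \<epsilon>" and e1: "\<epsilon> < 1/2"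
  shows "\<exists>(\<rho>::nat \<Rightarrow> real) (c::nat \<Rightarrow> real).
          (\<forall>j\<in>{0..d}. 0 \<le> \<rho> j \<and> \<rho> j \<le> 1 - \<epsilon>) \<and>
          (\<forall>k::nat. k \<le> d \<longrightarrow> (\<Sum>j=0..d. c j * \<rho> j ^ k) = 1) \<and>
          (\<forall>k::nat. k \<ge> d + 1 \<longrightarrow>
             0 \<le> (\<Sum>j=0..d. c j * \<rho> j ^ k) \<and> (\<Sum>j=0..d. c j * \<rho> j ^ k) \<le> 1) \<and>
          (\<Sum>j=0..d. \<bar>c j\<bar>) \<le> 2 powr (16 * real d * sqrt \<epsilon>)"
proof -
  define \<rho> where "\<rho> j = (1-\<epsilon>)*(1+cos(real j*pi/real d))/2" for j
  define I where "I = {0..d}"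
  define c where "c j = lagc \<rho> I 1 j" for j
  have fin: "finite I" and cardI: "card I = Suc d" and ne: "I \<noteq> {}" unfolding I_def by auto
  have rng: "0 \<le> \<rho> j \<and> \<rho> j \<le> 1 - \<epsilon>" for j
  proof -
    have c1: "-1 \<le> cos(real j*pi/real d)" "cos(real j*pi/real d) \<le> 1" by auto
    have "(1-\<epsilon>)*(1+cos(real j*pi/real d))/2 \<le> (1-\<epsilon>)*2/2"
      "0 \<le> (1-\<epsilon>)*(1+cos(real j*pi/real d))/2"
      by (intro divide_right_mono mult_left_mono mult_nonneg_nonneg divide_nonneg_pos; insert c1 e1; linarith)+
    then show ?thesis unfolding \<rho>_def by simp
  qed
  have anti: "\<rho> j < \<rho> i" if ij: "i < j" "j \<le> d" for i j
  proof -
    have d0: "0 < real d" using ij by simp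
    have "real i * pi / real d < real j * pi / real d" using ij d0 by (simp add: divide_strict_right_mono)
    moreover have "real j * pi / real d \<le> pi" using ij d0 by (simp add: field_simps)
    moreover have "0 \<le> real i * pi / real d" using d0 by simp
    ultimately have "cos(real j*pi/real d) < cos(real i*pi/real d)"
      by (subst cos_mono_less_eq) auto
    moreover have "0 < 1 - \<epsilon>" using e1 by simp
    ultimately show ?thesis unfolding \<rho>_def
      by (intro divide_strict_right_mono mult_strict_left_mono) auto
  qed
  have inj: "inj_on \<rho> I"
  proof (rule inj_onI)
    fix x y assume "x \<in> I" "y \<in> I" "\<rho> x = \<rho> y"
    then show "x = y" using anti[of x y] anti[of y x] unfolding I_def
      by (metis atLeastAtMost_iff less_irrefl linorder_neqE_nat)
  qed
  have lt1: "\<forall>i\<in>I. 0 \<le> \<rho> i \<and> \<rho> i < 1" using rng e0 by (smt (verit))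
  have P1: "\<forall>k::nat. k \<le> d \<longrightarrow> (\<Sum>j=0..d. c j * \<rho> j ^ k) = 1"
    using interp_pow[OF fin inj, of _ 1] cardI unfolding c_def I_def by simp
  have P2: "\<forall>k::nat. k \<ge> d + 1 \<longrightarrow>
             0 \<le> (\<Sum>j=0..d. c j * \<rho> j ^ k) \<and> (\<Sum>j=0..d. c j * \<rho> j ^ k) \<le> 1"
    using cond2[OF fin ne inj lt1] cardI unfolding c_def I_def by simp
  have sgn: "\<bar>c j\<bar> = (-1)^j * c j" if j: "j \<in> I" for j
  proof -
    define Q where "Q = (\<Prod>i\<in>I-{j}. (1 - \<rho> i))"
    define P' where "P' = (\<Prod>i\<in>{0..<j}. (\<rho> i - \<rho> j)) * (\<Prod>i\<in>{Suc j..d}. (\<rho> j - \<rho> i))"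
    have Q0: "Q > 0" unfolding Q_def using lt1 by (intro prod_pos) auto
    have P0: "P' > 0" unfolding P'_def using j anti unfolding I_def
      by (intro mult_pos_pos prod_pos) auto
    have split: "I - {j} = {0..<j} \<union> {Suc j..d}" using j unfolding I_def by auto
    have "(\<Prod>i\<in>I-{j}. (\<rho> j - \<rho> i)) = (\<Prod>i\<in>{0..<j}. (\<rho> j - \<rho> i)) * (\<Prod>i\<in>{Suc j..d}. (\<rho> j - \<rho> i))"
      unfolding split by (rule prod.union_disjoint) auto
    also have "(\<Prod>i\<in>{0..<j}. (\<rho> j - \<rho> i)) = (\<Prod>i\<in>{0..<j}. (-1::real) * (\<rho> i - \<rho> j))"
      by (intro prod.cong) auto
    also have "\<dots> = (-1)^j * (\<Prod>i\<in>{0..<j}. (\<rho> i - \<rho> j))"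
      by (simp only: prod.distrib prod_constant card_atLeastLessThan) simp
    finally have P: "(\<Prod>i\<in>I-{j}. (\<rho> j - \<rho> i)) = (-1)^j * P'" unfolding P'_def by simp
    have "(-1)^j * c j = Q / P'"
      unfolding c_def lagc_def Q_def[symmetric] P by (cases "even j") auto
    then have nn: "0 \<le> (-1)^j * c j" using Q0 P0 by simp
    have "\<bar>c j\<bar> = \<bar>(-1)^j * c j\<bar>" by (simp add: abs_mult)
    then show ?thesis using nn by simp
  qed
  define X where "X = -1 + 2/(1-\<epsilon>)"
  define g where "g = cheb d \<circ>\<^sub>p [:-1, 2/(1-\<epsilon>):]"
  have degg: "degree g < card I"
  proof -
    have "degree [:-1, 2/(1-\<epsilon>):] \<le> 1" by simp
    then have "degree g \<le> degree (cheb d) * 1"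
      using degree_pcompose_le[of "cheb d" "[:-1, 2/(1-\<epsilon>):]"] unfolding g_def
      by (meson le_trans mult_le_mono2)
    then show ?thesis using cheb_deg[of d] cardI by simp
  qed
  have gj: "poly g (\<rho> j) = (-1)^j" if j: "j \<in> I" for j
  proof -
    have "poly [:-1, 2/(1-\<epsilon>):] (\<rho> j) = cos(real j*pi/real d)"
      unfolding \<rho>_def using e1 by (simp add: field_simps)
    then have "poly g (\<rho> j) = cos (real d * (real j*pi/real d))"
      unfolding g_def by (simp add: poly_pcompose cheb_cos)
    also have "\<dots> = cos (real j * pi)"
      using j unfolding I_def by (cases "d = 0") auto
    finally show ?thesis by simp
  qed
  have "(\<Sum>j=0..d. \<bar>c j\<bar>) = (\<Sum>j\<in>I. c j * poly g (\<rho> j))"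
    unfolding I_def using sgn gj unfolding I_def by (intro sum.cong) (auto simp: mult.commute)
  also have "\<dots> = poly g 1" unfolding c_def by (rule interp[OF fin inj degg])
  also have "\<dots> = poly (cheb d) X" unfolding g_def X_def by (simp add: poly_pcompose)
  finally have S: "(\<Sum>j=0..d. \<bar>c j\<bar>) = poly (cheb d) X" .
  have X1: "X \<ge> 1" unfolding X_def using e0 e1 by (simp add: field_simps)
  define t where "t = arcosh X"
  have "poly (cheb d) X = cosh (real d * t)"
    using cheb_cosh[of d t] X1 unfolding t_def by simp
  have tdef: "t = ln (X + sqrt (X^2 - 1))" unfolding t_def using X1 by (rule arcosh_real_def)
  have sq0: "0 \<le> sqrt (X^2 - 1)" using X1 by simp
  have t0: "0 \<le> t" unfolding tdef using X1 sq0 by (intro ln_ge_zero) linarith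
  have tle: "t \<le> (X - 1) + sqrt (X^2 - 1)" unfolding tdef using ln_le_minus_one[of "X + sqrt (X^2 - 1)"] X1 sq0 by linarith
  have Xm: "X - 1 \<le> 4 * \<epsilon>" unfolding X_def using e0 e1 by (simp add: field_simps)
  have Xp: "X + 1 \<le> 4" unfolding X_def using e0 e1 by (simp add: field_simps)
  have "X^2 - 1 = (X - 1) * (X + 1)" by (simp add: power2_eq_square algebra_simps)
  also have "\<dots> \<le> (4 * \<epsilon>) * 4" using Xm Xp X1 by (intro mult_mono) auto
  finally have "sqrt (X^2 - 1) \<le> sqrt (16 * \<epsilon>)" by simp
  also have "\<dots> = 4 * sqrt \<epsilon>" by (simp add: real_sqrt_mult)
  finally have sqle: "sqrt (X^2 - 1) \<le> 4 * sqrt \<epsilon>" .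
  have "\<epsilon> \<le> sqrt \<epsilon>" using e0 e1 by (simp add: real_le_rsqrt power2_eq_square)
  with tle Xm sqle have t8: "t \<le> 8 * sqrt \<epsilon>" by linarith
  have ch: "cosh (real d * t) \<le> exp (real d * t)"
    using t0 by (simp add: cosh_field_def)
  have "exp (real d * t) \<le> exp (8 * real d * sqrt \<epsilon>)"
    using mult_left_mono[OF t8, of "real d"] by (simp add: mult_ac)
  also have "\<dots> \<le> 2 powr (16 * real d * sqrt \<epsilon>)"
  proof -
    have "exp (1/2) < (2::real)"
    proof (rule ccontr)
      assume "\<not> exp (1/2) < (2::real)"
      then have "2 * 2 \<le> exp (1/2) * exp (1/2::real)" by (intro mult_mono) auto
      also have "\<dots> = exp 1" by (simp flip: exp_add)
      finally show False using exp_le by simp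
    qed
    then have l2: "1/2 \<le> ln (2::real)" by (metis ln_exp ln_less_cancel_iff exp_gt_zero less_le_not_le zero_less_numeral nle_le)
    have "8 * real d * sqrt \<epsilon> \<le> ln 2 * (16 * real d * sqrt \<epsilon>)"
      using mult_right_mono[OF l2, of "16 * real d * sqrt \<epsilon>"] using e0 by (simp add: mult_ac)
    then show ?thesis by (simp add: powr_def)
  qed
  finally have "(\<Sum>j=0..d. \<bar>c j\<bar>) \<le> 2 powr (16 * real d * sqrt \<epsilon>)"
    using S ch \<open>poly (cheb d) X = cosh (real d * t)\<close> by linarith
  with P1 P2 rng show ?thesis by blast
qed


theorem lemma4p13:
  "\<exists>C::real. C > 0 \<and>
     (\<forall>(d::nat) (\<epsilon>::real). 0 < \<epsilon> \<and> \<epsilon> < 1/2 \<longrightarrow>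
       (\<exists>(\<rho>::nat \<Rightarrow> real) (c::nat \<Rightarrow> real).
          (\<forall>j\<in>{0..d}. 0 \<le> \<rho> j \<and> \<rho> j \<le> 1 - \<epsilon>) \<and>
          (\<forall>k::nat. k \<le> d \<longrightarrow> (\<Sum>j=0..d. c j * \<rho> j ^ k) = 1) \<and>
          (\<forall>k::nat. k \<ge> d + 1 \<longrightarrow>
             0 \<le> (\<Sum>j=0..d. c j * \<rho> j ^ k) \<and> (\<Sum>j=0..d. c j * \<rho> j ^ k) \<le> 1) \<and>
          (\<Sum>j=0..d. \<bar>c j\<bar>) \<le> 2 powr (C * real d * sqrt \<epsilon>)))"
  by (rule exI[of _ 16]) (use construct in auto)

end
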